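(* Let $R$ be a commutative ring with identity and $M$ a finitely generated multiplication $R$-module. Then $$\sum_{a\in\sqrt{(0:M)}} a\Gamma_a(M)=\beta(M).$$
   Context: $M$ is a multiplication module if every submodule $N$ of $M$ is of the form $IM$ for some ideal $I$ of $R$. $(0:M)=\{r\in R\mid rM=0\}$ and $\sqrt{(0:M)}$ is its radical. For $a\in R$, $a\Gamma_{a}(M)=\{am \mid m\in M,\ a^{k}m=0 \text{ for some } k\in\mathbb{Z}^{+}\}$. A proper submodule $N$ of $M$ is prime if for all $r\in R$, $m\in M$, $rm\in N$ implies $m\in N$ or $rM\subseteq N$; $\beta(M)$ is the intersection of all prime submodules of $M$. *)

theory Defs
  imports Complex_Main
begin

(* R is the type 'a :: comm_ring_1, M is the whole type 'b with scalar multiplication sc,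
   assumed to satisfy the locale  module sc. Submodules are Modules.module.subspace sc. *)

definition is_ideal :: "'a::comm_ring_1 set \<Rightarrow> bool" where
  "is_ideal I \<longleftrightarrow> 0 \<in> I \<and> (\<forall>x\<in>I. \<forall>y\<in>I. x + y \<in> I) \<and> (\<forall>r. \<forall>x\<in>I. r * x \<in> I)"

definition ideal_mult :: "('a::comm_ring_1 \<Rightarrow> 'b::ab_group_add \<Rightarrow> 'b) \<Rightarrow> 'a set \<Rightarrow> 'b set" where
  "ideal_mult sc I = Modules.module.span sc {sc r m | r m. r \<in> I}"

definition finitely_generated_module :: "('a::comm_ring_1 \<Rightarrow> 'b::ab_group_add \<Rightarrow> 'b) \<Rightarrow> bool" where
  "finitely_generated_module sc \<longleftrightarrow> (\<exists>S. finite S \<and> Modules.module.span sc S = UNIV)"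

definition multiplication_module :: "('a::comm_ring_1 \<Rightarrow> 'b::ab_group_add \<Rightarrow> 'b) \<Rightarrow> bool" where
  "multiplication_module sc \<longleftrightarrow>
     (\<forall>N. Modules.module.subspace sc N \<longrightarrow> (\<exists>I. is_ideal I \<and> N = ideal_mult sc I))"

definition annihilator :: "('a::comm_ring_1 \<Rightarrow> 'b::ab_group_add \<Rightarrow> 'b) \<Rightarrow> 'a set" where
  "annihilator sc = {r. \<forall>m. sc r m = 0}"

definition radical :: "'a::comm_ring_1 set \<Rightarrow> 'a set" where
  "radical I = {r. \<exists>n. r ^ n \<in> I}"

definition aGamma :: "('a::comm_ring_1 \<Rightarrow> 'b::ab_group_add \<Rightarrow> 'b) \<Rightarrow> 'a \<Rightarrow> 'b set" where
  "aGamma sc a = {sc a m | m. \<exists>k::nat. k > 0 \<and> sc (a ^ k) m = 0}"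

definition prime_submodule :: "('a::comm_ring_1 \<Rightarrow> 'b::ab_group_add \<Rightarrow> 'b) \<Rightarrow> 'b set \<Rightarrow> bool" where
  "prime_submodule sc N \<longleftrightarrow> Modules.module.subspace sc N \<and> N \<noteq> UNIV \<and>
     (\<forall>r m. sc r m \<in> N \<longrightarrow> m \<in> N \<or> (\<forall>x. sc r x \<in> N))"

(* beta(M): intersection of all prime submodules (= M if there are none) *)
definition beta_module :: "('a::comm_ring_1 \<Rightarrow> 'b::ab_group_add \<Rightarrow> 'b) \<Rightarrow> 'b set" where
  "beta_module sc = \<Inter> {N. prime_submodule sc N}"

definition sum_submodules :: "('a::comm_ring_1 \<Rightarrow> 'b::ab_group_add \<Rightarrow> 'b) \<Rightarrow> 'b set set \<Rightarrow> 'b set" where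
  "sum_submodules sc F = Modules.module.span sc (\<Union> F)"

end

theory Submission
  imports Defs
begin

context module
begin

lemma scale_into_subspace:
  assumes T: "subspace T" and x: "x \<in> span S" and h: "\<And>s. s \<in> S \<Longrightarrow> r *s s \<in> T"
  shows "r *s x \<in> T"
proof -
  have "subspace (Collect (\<lambda>x. r *s x \<in> T))"
  proof (rule subspaceI)
    show "0 \<in> Collect (\<lambda>x. r *s x \<in> T)" using subspace_0[OF T] by simp
    show "x + y \<in> Collect (\<lambda>x. r *s x \<in> T)" if "x \<in> Collect (\<lambda>x. r *s x \<in> T)" "y \<in> Collect (\<lambda>x. r *s x \<in> T)" for x y
      using that subspace_add[OF T] by (simp add: scale_right_distrib)
    show "c *s x \<in> Collect (\<lambda>x. r *s x \<in> T)" if "x \<in> Collect (\<lambda>x. r *s x \<in> T)" for c x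
    proof -
      have "r *s c *s x = c *s (r *s x)" by (simp add: mult.commute)
      then show ?thesis using that subspace_scale[OF T] by (metis mem_Collect_eq)
    qed
  qed
  then show ?thesis using span_induct[OF x, of "\<lambda>x. r *s x \<in> T"] h by blast
qed

lemma chain_subspace:
  assumes "\<C> \<noteq> {}" "subset.chain \<A> \<C>" "\<And>P. P \<in> \<A> \<Longrightarrow> subspace P"
  shows "subspace (\<Union>\<C>)"
proof (rule subspaceI)
  have sub: "\<And>P. P \<in> \<C> \<Longrightarrow> subspace P" using assms unfolding subset.chain_def by blast
  show "0 \<in> \<Union>\<C>" using assms(1) sub subspace_0 by blast
  show "c *s x \<in> \<Union>\<C>" if "x \<in> \<Union>\<C>" for c x using that sub subspace_scale by blast
  show "x + y \<in> \<Union>\<C>" if xy: "x \<in> \<Union>\<C>" "y \<in> \<Union>\<C>" for x y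
  proof -
    obtain X Y where XY: "X \<in> \<C>" "Y \<in> \<C>" "x \<in> X" "y \<in> Y" using xy by blast
    then have "X \<subseteq> Y \<or> Y \<subseteq> X" using assms(2) unfolding subset.chain_def by blast
    then show ?thesis using XY sub subspace_add by blast
  qed
qed

lemma prime_avoiding:
  assumes fS: "finite S" and spS: "span S = UNIV"
    and c: "\<And>n. \<exists>x. (c ^ n) *s x \<noteq> 0"
  shows "\<exists>P. prime_submodule scale P \<and> (\<forall>n. \<exists>x. (c ^ n) *s x \<notin> P)"
proof -
  define F where "F = {P. subspace P \<and> (\<forall>n. \<exists>x. (c ^ n) *s x \<notin> P)}"
  have "{0} \<in> F" unfolding F_def using c by auto
  then have "F \<noteq> {}" by blast
  moreover have "\<Union>\<C> \<in> F" if ne: "\<C> \<noteq> {}" and ch: "subset.chain F \<C>" for \<C>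
  proof -
    have sub: "subspace (\<Union>\<C>)" by (rule chain_subspace[OF ne ch]) (simp add: F_def)
    have "\<exists>x. (c ^ n) *s x \<notin> \<Union>\<C>" for n
    proof (rule ccontr)
      assume "\<not> (\<exists>x. (c ^ n) *s x \<notin> \<Union>\<C>)"
      then have all: "\<And>x. (c ^ n) *s x \<in> \<Union>\<C>" by blast
      have "finite ((\<lambda>s. (c ^ n) *s s) ` S)" using fS by simp
      moreover have "(\<lambda>s. (c ^ n) *s s) ` S \<subseteq> \<Union>\<C>" using all by blast
      ultimately obtain B where B: "B \<in> \<C>" "(\<lambda>s. (c ^ n) *s s) ` S \<subseteq> B"
        using finite_subset_Union_chain[OF _ _ ne ch] by metis
      have BF: "B \<in> F" using B(1) ch unfolding subset.chain_def by blast
      then have "subspace B" unfolding F_def by blast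
      then have "\<And>x. (c ^ n) *s x \<in> B"
        using scale_into_subspace[of B _ S "c ^ n"] B(2) spS by blast
      then show False using BF unfolding F_def by blast
    qed
    then show ?thesis using sub unfolding F_def by blast
  qed
  ultimately obtain P where PF: "P \<in> F" and maxP: "\<And>X. X \<in> F \<Longrightarrow> P \<subseteq> X \<Longrightarrow> X = P"
    using subset_Zorn_nonempty[of F] by blast
  have subP: "subspace P" and avP: "\<And>n. \<exists>x. (c ^ n) *s x \<notin> P" using PF unfolding F_def by auto
  have notU: "P \<noteq> UNIV" using avP[of 0] by auto
  have prime: "sc_r_x \<in> P \<longrightarrow> m \<in> P \<or> (\<forall>x. r *s x \<in> P)" if "sc_r_x = r *s m" for r m sc_r_x
  proof (intro impI, rule ccontr)
    assume rm: "sc_r_x \<in> P" and "\<not> (m \<in> P \<or> (\<forall>x. r *s x \<in> P))"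
    then obtain y where mP: "m \<notin> P" and yP: "r *s y \<notin> P" by blast
    define P1 where "P1 = span (insert m P)"
    define P2 where "P2 = span (P \<union> range (\<lambda>x. r *s x))"
    have "P1 \<notin> F"
    proof
      assume "P1 \<in> F"
      moreover have "P \<subseteq> P1" unfolding P1_def using span_superset by blast
      ultimately have "P1 = P" using maxP by blast
      moreover have "m \<in> P1" unfolding P1_def by (simp add: span_base)
      ultimately show False using mP by simp
    qed
    then obtain n where n: "\<And>x. (c ^ n) *s x \<in> P1" unfolding F_def P1_def by auto
    have "P2 \<notin> F"
    proof
      assume "P2 \<in> F"
      moreover have "P \<subseteq> P2" unfolding P2_def using span_superset by blast
      ultimately have "P2 = P" using maxP by blast
      moreover have "r *s y \<in> P2" unfolding P2_def by (simp add: span_base)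
      ultimately show False using yP by simp
    qed
    then obtain k where k: "\<And>x. (c ^ k) *s x \<in> P2" unfolding F_def P2_def by auto
    have rP1: "r *s v \<in> P" if "v \<in> P1" for v
      using scale_into_subspace[OF subP that[unfolded P1_def]] rm that subP subspace_scale
      by (auto simp: \<open>sc_r_x = r *s m\<close>)
    have cP2: "(c ^ n) *s w \<in> P" if "w \<in> P2" for w
    proof (rule scale_into_subspace[OF subP that[unfolded P2_def]])
      fix s assume "s \<in> P \<union> range (\<lambda>x. r *s x)"
      then show "(c ^ n) *s s \<in> P"
      proof
        assume "s \<in> P" then show ?thesis using subP subspace_scale by blast
      next
        assume "s \<in> range (\<lambda>x. r *s x)"
        then obtain x where "s = r *s x" by blast
        then have "(c ^ n) *s s = r *s ((c ^ n) *s x)" by (simp add: mult.commute)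
        then show ?thesis using rP1[OF n[of x]] by simp
      qed
    qed
    have "(c ^ (n + k)) *s x \<in> P" for x
    proof -
      have "(c ^ (n + k)) *s x = (c ^ n) *s ((c ^ k) *s x)" by (simp add: power_add)
      then show ?thesis using cP2[OF k[of x]] by simp
    qed
    then show False using avP[of "n + k"] by blast
  qed
  have "prime_submodule scale P"
    unfolding prime_submodule_def using subP notU prime by blast
  then show ?thesis using avP by blast
qed

end

theorem mainTheorem16:
  fixes sc :: "'a::comm_ring_1 \<Rightarrow> 'b::ab_group_add \<Rightarrow> 'b"
  assumes "module sc"
    and "finitely_generated_module sc"
    and "multiplication_module sc"
  shows "sum_submodules sc ((\<lambda>a. aGamma sc a) ` radical (annihilator sc)) = beta_module sc"
proof -
  interpret M: module sc by fact
  obtain S where fS: "finite S" and spS: "M.span S = UNIV"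
    using assms(2) unfolding finitely_generated_module_def by blast
  let ?A = "annihilator sc"
  let ?U = "\<Union> ((\<lambda>a. aGamma sc a) ` radical ?A)"
  let ?L = "M.span ?U"
  have radA: "\<exists>k::nat. k > 0 \<and> sc (r ^ k) x = 0" if rr: "r \<in> radical ?A" for r x
  proof -
    obtain n where "r ^ n \<in> ?A" using rr unfolding radical_def by blast
    then have "sc (r ^ n) y = 0" for y unfolding annihilator_def by blast
    then have "sc (r ^ Suc n) x = 0"
      by (metis M.scale_scale M.scale_zero_right power_Suc2)
    then show ?thesis by blast
  qed
  have U_mem: "sc r x \<in> ?U" if "r \<in> radical ?A" for r x
    using radA[OF that, of x] that unfolding aGamma_def by blast
  have sub1: "?L \<subseteq> beta_module sc"
  proof
    fix z assume z: "z \<in> ?L"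
    show "z \<in> beta_module sc" unfolding beta_module_def
    proof
      fix P assume "P \<in> {N. prime_submodule sc N}"
      then have subP: "M.subspace P"
        and pr: "\<And>r m. sc r m \<in> P \<Longrightarrow> m \<in> P \<or> (\<forall>x. sc r x \<in> P)"
        unfolding prime_submodule_def by auto
      have key: "(\<forall>x. sc (a ^ j) x \<in> P) \<Longrightarrow> sc a x \<in> P" for a j x
      proof (induction j arbitrary: x)
        case 0 then show ?case by simp
      next
        case (Suc j)
        show ?case
        proof (cases "\<forall>y. sc (a ^ j) y \<in> P")
          case True then show ?thesis using Suc.IH by blast
        next
          case False
          then obtain y where y: "sc (a ^ j) y \<notin> P" by blast
          have "sc a (sc (a ^ j) y) \<in> P" using Suc.prems by (simp add: power_Suc)
          then show ?thesis using pr y by blast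
        qed
      qed
      have "?U \<subseteq> P"
      proof
        fix u assume "u \<in> ?U"
        then obtain a m where a: "a \<in> radical ?A" and u: "u = sc a m" unfolding aGamma_def by blast
        obtain n where "a ^ n \<in> ?A" using a unfolding radical_def by blast
        then have "\<forall>x. sc (a ^ n) x \<in> P" unfolding annihilator_def using M.subspace_0[OF subP] by simp
        then show "u \<in> P" using key u by blast
      qed
      then show "z \<in> P" using M.span_minimal[OF _ subP] z by blast
    qed
  qed
  have sub2: "beta_module sc \<subseteq> ?L"
  proof
    fix m assume mB: "m \<in> beta_module sc"
    show "m \<in> ?L"
    proof (rule ccontr)
      assume mL: "m \<notin> ?L"
      obtain I where I: "is_ideal I" and T: "M.span {m} = ideal_mult sc I"
        using assms(3) unfolding multiplication_module_def by (meson M.subspace_span)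
      have mT: "m \<in> M.span {m}" by (simp add: M.span_base)
      show False
      proof (cases "I \<subseteq> radical ?A")
        case True
        then have "{sc r x | r x. r \<in> I} \<subseteq> ?U" using U_mem by blast
        then have "M.span {m} \<subseteq> ?L" using T unfolding ideal_mult_def by (simp add: M.span_mono)
        then show False using mT mL by blast
      next
        case False
        then obtain c where cI: "c \<in> I" and cA: "c \<notin> radical ?A" by blast
        have "\<exists>x. sc (c ^ n) x \<noteq> 0" for n
          using cA unfolding radical_def annihilator_def by blast
        then obtain P where P: "prime_submodule sc P" and av: "\<And>n. \<exists>x. sc (c ^ n) x \<notin> P"
          using M.prime_avoiding[OF fS spS] by blast
        have "m \<in> P" using mB P unfolding beta_module_def by blast
        moreover have "M.subspace P" using P unfolding prime_submodule_def by blast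
        ultimately have "M.span {m} \<subseteq> P" using M.span_minimal by blast
        moreover have "sc c x \<in> M.span {m}" for x
          using T cI unfolding ideal_mult_def by (auto intro: M.span_base)
        ultimately have "sc (c ^ 1) x \<in> P" for x by auto
        then show False using av[of 1] by blast
      qed
    qed
  qed
  show ?thesis unfolding sum_submodules_def using sub1 sub2 by blast
qed

end
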